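(* Let $G$ be a group and $A$ an additive abelian group with a right $G$-action by group automorphisms. For $k\ge0$ let $\partial_k:\mathcal C^k(G,A)\to\mathcal C^{k+1}(G,A)$ be $(\partial_kc)(g_1,\dots,g_{k+1})=[c(g_1,\dots,g_k)]^{g_{k+1}}-c(g_1,\dots,g_k)$ (so $D^{n}=\partial_{n-1}\cdots\partial_0$). Then for every $n\ge1$: (1) $\delta^n\partial_{n-1}=\partial_n\delta^{n-1}+(-1)^n\partial_n\partial_{n-1}$ on $\mathcal C^{n-1}(G,A)$; (2) $\delta^nD^n=\partial_n\delta^{n-1}D^{n-1}+(-1)^nD^{n+1}$; (3) $\delta^nD^n=-D^{n+1}$ if $n$ is odd and $\delta^nD^n=0$ if $n$ is even (the latter also for $n=0$).
   Context: Right action: $a\mapsto a^g$, $a^{\mathbf e}=a$, $(a^g)^h=a^{gh}$, additive in $a$; $\mathbf e$ the identity of $G$. $\mathcal C^0(G,A)=A$; for $n\ge1$, $\mathcal C^n(G,A)$ is the group of functions $G^n\to A$ vanishing whenever some argument is $\mathbf e$. $D^0=\mathrm{id}_A$ and $D^n=\partial_{n-1}D^{n-1}$. The coboundary operator for the trivial left action, $\delta^n:\mathcal C^n(G,A)\to\mathcal C^{n+1}(G,A)$, is $[\delta^nc](g_1,\dots,g_{n+1})=c(g_2,\dots,g_{n+1})+\sum_{i=1}^{n}(-1)^ic(g_1,\dots,g_ig_{i+1},\dots,g_{n+1})+(-1)^{n+1}c(g_1,\dots,g_n)$; in particular $\delta^0=0$. *)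

theory Defs
  imports "HOL-Algebra.Group"
begin

text \<open>Cochains are represented as functions on lists of group elements; an n-cochain
  is only evaluated on lists of length n with entries in the carrier.\<close>

definition right_action :: "('g, 'b) monoid_scheme \<Rightarrow> ('a::ab_group_add \<Rightarrow> 'g \<Rightarrow> 'a) \<Rightarrow> bool" where
  "right_action G act \<longleftrightarrow>
     (\<forall>a. act a \<one>\<^bsub>G\<^esub> = a) \<and>
     (\<forall>a. \<forall>g\<in>carrier G. \<forall>h\<in>carrier G. act (act a g) h = act a (g \<otimes>\<^bsub>G\<^esub> h)) \<and>
     (\<forall>a b. \<forall>g\<in>carrier G. act (a + b) g = act a g + act b g)"

definition cochains :: "('g, 'b) monoid_scheme \<Rightarrow> nat \<Rightarrow> ('g list \<Rightarrow> 'a::ab_group_add) set" where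
  "cochains G n = {c. \<forall>gs. length gs = n \<and> set gs \<subseteq> carrier G \<and> \<one>\<^bsub>G\<^esub> \<in> set gs \<longrightarrow> c gs = 0}"

definition signed :: "nat \<Rightarrow> 'a::ab_group_add \<Rightarrow> 'a" where
  "signed i x = (if even i then x else - x)"

definition pd :: "('a::ab_group_add \<Rightarrow> 'g \<Rightarrow> 'a) \<Rightarrow> nat \<Rightarrow> ('g list \<Rightarrow> 'a) \<Rightarrow> 'g list \<Rightarrow> 'a" where
  "pd act k c gs = act (c (take k gs)) (gs ! k) - c (take k gs)"

text \<open>Merge the i-th and (i+1)-th entries (1-indexed) of a list.\<close>
definition merge_at :: "('g, 'b) monoid_scheme \<Rightarrow> nat \<Rightarrow> 'g list \<Rightarrow> 'g list" where
  "merge_at G i gs = take (i - 1) gs @ [gs ! (i - 1) \<otimes>\<^bsub>G\<^esub> gs ! i] @ drop (i + 1) gs"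

text \<open>\<open>\<delta>\<^sup>n\<close>: coboundary for the trivial left action, from n-cochains to (n+1)-cochains.\<close>
definition cobd :: "('g, 'b) monoid_scheme \<Rightarrow> nat \<Rightarrow> ('g list \<Rightarrow> 'a::ab_group_add) \<Rightarrow> 'g list \<Rightarrow> 'a" where
  "cobd G n c gs = c (tl gs) + (\<Sum>i=1..n. signed i (c (merge_at G i gs))) + signed (n + 1) (c (take n gs))"

text \<open>\<open>D\<^sup>0 = id\<close>, \<open>D\<^sup>n = \<partial>\<^sub>n\<^sub>-\<^sub>1 D\<^sup>n\<^sup>-\<^sup>1\<close>; an element a of A is the 0-cochain \<open>\<lambda>_. a\<close>.\<close>
fun DD :: "('a::ab_group_add \<Rightarrow> 'g \<Rightarrow> 'a) \<Rightarrow> nat \<Rightarrow> ('g list \<Rightarrow> 'a) \<Rightarrow> 'g list \<Rightarrow> 'a" where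
  "DD act 0 c = c"
| "DD act (Suc n) c = pd act n (DD act n c)"

end

theory Submission
  imports Defs
begin

lemma act_props:
  assumes ra: "right_action G act" and h: "h \<in> carrier G"
  shows act_add: "act (x + y) h = act x h + act y h"
    and act_zero: "act 0 h = 0"
    and act_neg: "act (- x) h = - act x h"
    and act_diff: "act (x - y) h = act x h - act y h"
    and act_signed: "act (signed i x) h = signed i (act x h)"
proof -
  show A: "act (x + y) h = act x h + act y h" for x y using ra h by (simp add: right_action_def)
  show Z: "act 0 h = 0" using A[of 0 0] by simp
  show N: "act (- x) h = - act x h" for x using A[of "-x" x] Z by (simp add: eq_neg_iff_add_eq_0)
  show "act (x - y) h = act x h - act y h" using A[of x "-y"] N[of y] by simp
  show "act (signed i x) h = signed i (act x h)" using N by (simp add: signed_def)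
qed

lemma act_sum:
  assumes ra: "right_action G act" and h: "h \<in> carrier G"
  shows "act (\<Sum>i\<in>I. f i) h = (\<Sum>i\<in>I. act (f i) h)"
proof (cases "finite I")
  case True then show ?thesis
    by (induction I rule: finite_induct) (simp_all add: act_zero[OF ra h] act_add[OF ra h])
next
  case False then show ?thesis by (simp add: act_zero[OF ra h])
qed

lemma merge_split: "length xs = j \<Longrightarrow> merge_at G (Suc j) (xs @ x # y # zs) = xs @ (x \<otimes>\<^bsub>G\<^esub> y) # zs"
  by (simp add: merge_at_def nth_append)

lemma F3gen: "length gs = k+2 \<Longrightarrow> 1 \<le> i \<Longrightarrow> i \<le> k \<Longrightarrow> take k (merge_at G i gs) = merge_at G i (take (k+1) gs)
   \<and> merge_at G i gs ! k = gs ! (k+1)"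
proof -
  assume a: "length gs = k+2" "1 \<le> i" "i \<le> k"
  then obtain j m where ij: "i = Suc j" "k = Suc j + m" by (metis Suc_le_D le_Suc_ex Suc_le_eq One_nat_def)
  define xs where "xs = take j gs"
  define zs where "zs = drop (Suc (Suc j)) gs"
  have gs: "gs = xs @ gs ! j # gs ! Suc j # zs" unfolding xs_def zs_def using a ij
    by (metis Cons_nth_drop_Suc Suc_lessD add_2_eq_Suc' add_Suc less_add_Suc1 id_take_nth_drop)
  have lx: "length xs = j" unfolding xs_def using a ij by simp
  have lz: "length zs = Suc m" unfolding zs_def using a ij by simp
  have t1: "take k (xs @ x # zs) = xs @ x # take m zs" for x using lx ij by simp
  have t2: "take (k+1) (xs @ x # y # zs) = xs @ x # y # take m zs" for x y using lx ij by simp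
  have n1: "(xs @ x # zs) ! k = zs ! m" for x using lx ij by (simp add: nth_append)
  have n2: "(xs @ x # y # zs) ! (k+1) = zs ! m" for x y using lx ij by (simp add: nth_append)
  show ?thesis
    apply (subst (1 2 3 4) gs)
    unfolding ij(1) merge_split[OF lx] t2 merge_split[OF lx] t1 n1 n2 using ij
    by simp
qed

lemma main:
  assumes grp: "group G" and ra: "right_action G act" and len: "length gs = k + 2"
    and sub: "set gs \<subseteq> carrier G"
  shows "cobd G (k+1) (pd act k c) gs = pd act (k+1) (cobd G k c) gs
           + signed (k+1) (pd act (k+1) (pd act k c) gs)"
proof -
  define h where "h = gs ! (k+1)"
  define g where "g = gs ! k"
  define T where "T = take (k+1) gs"
  define c' where "c' = c (take k gs)"
  have hC: "h \<in> carrier G" using sub len unfolding h_def by (simp add: subset_iff)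
  have gC: "g \<in> carrier G" using sub len unfolding g_def by (simp add: subset_iff)
  have comp: "act (act c' g) h = act c' (g \<otimes>\<^bsub>G\<^esub> h)"
    using ra gC hC by (simp add: right_action_def)
  have F1: "take k (tl gs) = tl T" unfolding T_def by (simp add: take_tl)
  have F2: "tl gs ! k = h" unfolding h_def using len by (simp add: nth_tl)
  have F3: "take k (merge_at G i gs) = merge_at G i T \<and> merge_at G i gs ! k = h"
    if "1 \<le> i" "i \<le> k" for i
    using F3gen[OF len that] unfolding T_def h_def .
  have F4: "take k (merge_at G (k+1) gs) = take k gs"
     "merge_at G (k+1) gs ! k = g \<otimes>\<^bsub>G\<^esub> h"
    using len unfolding merge_at_def g_def h_def by (simp_all add: nth_append min_def)
  have F5: "take k T = take k gs" "T ! k = g" "tl T = take k (tl gs)"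
    using len F1 unfolding T_def g_def by auto
  have L: "cobd G (k+1) (pd act k c) gs = (act (c (tl T)) h - c (tl T))
     + (\<Sum>i=1..k. signed i (act (c (merge_at G i T)) h - c (merge_at G i T)))
     + signed (k+1) (act c' (g \<otimes>\<^bsub>G\<^esub> h) - c') + signed (k+2) (act c' g - c')"
  proof -
    have S: "(\<Sum>i=1..k+1. signed i (pd act k c (merge_at G i gs)))
      = (\<Sum>i=1..k. signed i (act (c (merge_at G i T)) h - c (merge_at G i T)))
        + signed (k+1) (act c' (g \<otimes>\<^bsub>G\<^esub> h) - c')"
      using F3 F4 unfolding c'_def by (simp add: pd_def)
    show ?thesis unfolding cobd_def S using F1 F2 F5
      by (simp add: pd_def c'_def T_def[symmetric] g_def[symmetric] algebra_simps)
  qed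
  have R: "pd act (k+1) (cobd G k c) gs = (act (c (tl T)) h - c (tl T))
     + (\<Sum>i=1..k. signed i (act (c (merge_at G i T)) h - c (merge_at G i T)))
     + signed (k+1) (act c' h - c')"
  proof -
    have C: "cobd G k c T = c (tl T) + (\<Sum>i=1..k. signed i (c (merge_at G i T))) + signed (k+1) c'"
      unfolding cobd_def c'_def F5(1) ..
    have AC: "act (cobd G k c T) h = act (c (tl T)) h + (\<Sum>i=1..k. signed i (act (c (merge_at G i T)) h)) + signed (k+1) (act c' h)"
      unfolding C by (simp add: act_add[OF ra hC] act_sum[OF ra hC] act_signed[OF ra hC])
    have SD: "(\<Sum>i=1..k. signed i (act (c (merge_at G i T)) h - c (merge_at G i T)))
       = (\<Sum>i=1..k. signed i (act (c (merge_at G i T)) h)) - (\<Sum>i=1..k. signed i (c (merge_at G i T)))"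
      unfolding sum_subtractf[symmetric] by (rule sum.cong) (auto simp: signed_def)
    have "pd act (k+1) (cobd G k c) gs = act (cobd G k c T) h - cobd G k c T"
      unfolding pd_def T_def h_def ..
    also have "\<dots> = (act (c (tl T)) h - c (tl T))
     + (\<Sum>i=1..k. signed i (act (c (merge_at G i T)) h - c (merge_at G i T)))
     + signed (k+1) (act c' h - c')"
      unfolding AC SD unfolding C by (simp add: signed_def)
    finally show ?thesis .
  qed
  have P: "pd act (k+1) (pd act k c) gs = act c' (g \<otimes>\<^bsub>G\<^esub> h) - act c' h - act c' g + c'"
    unfolding pd_def T_def[symmetric] h_def[symmetric]
    using comp by (simp add: F5 c'_def act_diff[OF ra hC] algebra_simps)
  show ?thesis unfolding L R P by (simp add: signed_def algebra_simps)
qed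

lemma main2:
  assumes "group G" "right_action G act" "n \<ge> 1" "length gs = n + 1" "set gs \<subseteq> carrier G"
  shows "cobd G n (pd act (n - 1) c) gs = pd act n (cobd G (n - 1) c) gs + signed n (pd act n (pd act (n - 1) c) gs)"
  using main[OF assms(1,2), of gs "n - 1" c] assms(3-5) by simp

lemma part3:
  assumes grp: "group G" and ra: "right_action G act"
  shows "length gs = n + 1 \<Longrightarrow> set gs \<subseteq> carrier G \<Longrightarrow>
     cobd G n (DD act n (\<lambda>_. a)) gs = (if odd n then - DD act (n + 1) (\<lambda>_. a) gs else 0)"
proof (induction n arbitrary: gs)
  case 0
  then show ?case by (simp add: cobd_def signed_def)
next
  case (Suc m)
  have hC: "gs ! Suc m \<in> carrier G" using Suc.prems by (simp add: subset_iff)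
  have IH: "cobd G m (DD act m (\<lambda>_. a)) (take (Suc m) gs) = (if odd m then - DD act (m + 1) (\<lambda>_. a) (take (Suc m) gs) else 0)"
    using Suc.prems by (intro Suc.IH) (auto dest: in_set_takeD)
  have M: "cobd G (Suc m) (DD act (Suc m) (\<lambda>_. a)) gs = pd act (Suc m) (cobd G m (DD act m (\<lambda>_. a))) gs
      + signed (Suc m) (DD act (Suc m + 1) (\<lambda>_. a) gs)"
    using main2[OF grp ra, of "Suc m" gs "DD act m (\<lambda>_. a)"] Suc.prems by simp
  have P: "pd act (Suc m) (cobd G m (DD act m (\<lambda>_. a))) gs
     = (if odd m then - DD act (Suc m + 1) (\<lambda>_. a) gs else 0)"
  proof -
    have D: "DD act (Suc m + 1) (\<lambda>_. a) gs = act (DD act (m + 1) (\<lambda>_. a) (take (Suc m) gs)) (gs ! Suc m)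
        - DD act (m + 1) (\<lambda>_. a) (take (Suc m) gs)"
      by (simp only: DD.simps(2) Suc_eq_plus1[symmetric] pd_def)
    show ?thesis unfolding D pd_def[of act "Suc m"] IH
      by (simp del: DD.simps add: act_neg[OF ra hC] act_zero[OF ra hC])
  qed
  show ?case unfolding M P by (simp add: signed_def)
qed

theorem lemma1p21:
  fixes G :: "('g, 'b) monoid_scheme" and act :: "'a::ab_group_add \<Rightarrow> 'g \<Rightarrow> 'a"
  assumes "group G" and "right_action G act"
  shows "(\<forall>n\<ge>1. \<forall>c\<in>cochains G (n - 1). \<forall>gs. length gs = n + 1 \<and> set gs \<subseteq> carrier G \<longrightarrow>
            cobd G n (pd act (n - 1) c) gs
              = pd act n (cobd G (n - 1) c) gs + signed n (pd act n (pd act (n - 1) c) gs))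
       \<and> (\<forall>n\<ge>1. \<forall>a. \<forall>gs. length gs = n + 1 \<and> set gs \<subseteq> carrier G \<longrightarrow>
            cobd G n (DD act n (\<lambda>_. a)) gs
              = pd act n (cobd G (n - 1) (DD act (n - 1) (\<lambda>_. a))) gs
                + signed n (DD act (n + 1) (\<lambda>_. a) gs))
       \<and> (\<forall>n. \<forall>a. \<forall>gs. length gs = n + 1 \<and> set gs \<subseteq> carrier G \<longrightarrow>
            cobd G n (DD act n (\<lambda>_. a)) gs
              = (if odd n then - DD act (n + 1) (\<lambda>_. a) gs else 0))"
proof (intro conjI allI impI ballI)
  fix n c gs
  assume "1 \<le> n" "length gs = n + 1 \<and> set gs \<subseteq> carrier G"
  then show "cobd G n (pd act (n - 1) c) gs
              = pd act n (cobd G (n - 1) c) gs + signed n (pd act n (pd act (n - 1) c) gs)"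
    using main2[OF assms] by blast
next
  fix n a gs
  assume n: "1 \<le> n" and g: "length gs = n + 1 \<and> set gs \<subseteq> carrier G"
  have e1: "DD act n (\<lambda>_. a) = pd act (n - 1) (DD act (n - 1) (\<lambda>_. a))"
    using n by (cases n) auto
  have e2: "DD act (n + 1) (\<lambda>_. a) = pd act n (pd act (n - 1) (DD act (n - 1) (\<lambda>_. a)))"
    using e1 by simp
  show "cobd G n (DD act n (\<lambda>_. a)) gs
              = pd act n (cobd G (n - 1) (DD act (n - 1) (\<lambda>_. a))) gs
                + signed n (DD act (n + 1) (\<lambda>_. a) gs)"
    unfolding e2 unfolding e1 using main2[OF assms n] g by blast
next
  fix n a gs
  assume "length gs = n + 1 \<and> set gs \<subseteq> carrier G"
  then show "cobd G n (DD act n (\<lambda>_. a)) gs = (if odd n then - DD act (n + 1) (\<lambda>_. a) gs else 0)"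
    using part3[OF assms] by blast
qed

end
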